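(* For $\alpha>1$ let $R_1$ be the rectangle with vertices $(\pm\tfrac12,\pm\tfrac\alpha2,0)$, $R_2$ the rectangle with vertices $(\pm\tfrac\alpha2,0,\pm\tfrac12)$, and $R_3$ the rectangle with vertices $(0,\pm\tfrac12,\pm\tfrac\alpha2)$ (each with side lengths $1$ and $\alpha$); these form the Borromean rings. The minimum distance energy of $R_1\cup R_2\cup R_3$ is $$E_B(\alpha)=6\left(17\alpha^2+\frac{16\alpha}{\alpha^2+1}+\frac{16}{2\alpha^2-2\alpha+1}+\frac{8\alpha}{(\alpha-1)^2}+\frac{8\alpha}{(\alpha+1)^2}+\frac{1}{\alpha^2}\right),$$ in which each rectangle contributes self-energy $2(\alpha^2+\alpha^{-2})$. The minimum of $E_B$ over $\alpha>1$ is attained at $\alpha^*\approx1.756$, with $E_B(\alpha^* )\approx542.6$.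
   Context: For a link of closed polygons in $\mathbb R^3$ (each with at least four edges), the minimum distance (MD) energy is $E_{MD}=\sum_{(e,e')}\frac{\ell_e\ell_{e'}}{\mathrm{MD}(e,e')^2}$, summed over all ordered pairs $(e,e')$ of distinct edges that share no vertex (edges on different components never share a vertex), where $\ell_e$ is the length of edge $e$ and $\mathrm{MD}(e,e')$ is the minimum Euclidean distance between the two closed line segments. With this convention a square has MD energy $4$. *)

theory Defs
  imports "HOL-Analysis.Analysis"
begin

text \<open>A closed polygon in R^3 is given by its cyclic list of vertices; a link is a
  list of polygons (its components).\<close>

type_synonym polygon = "(real^3) list"

definition edge_ends :: "polygon list \<Rightarrow> nat \<times> nat \<Rightarrow> (real^3) \<times> (real^3)" where
  "edge_ends L e = (let P = L ! fst e; n = length P in (P ! snd e, P ! ((snd e + 1) mod n)))"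

definition link_edges :: "polygon list \<Rightarrow> (nat \<times> nat) set" where
  "link_edges L = {(k, i). k < length L \<and> i < length (L ! k)}"

definition edge_len :: "polygon list \<Rightarrow> nat \<times> nat \<Rightarrow> real" where
  "edge_len L e = dist (fst (edge_ends L e)) (snd (edge_ends L e))"

definition edge_seg :: "polygon list \<Rightarrow> nat \<times> nat \<Rightarrow> (real^3) set" where
  "edge_seg L e = closed_segment (fst (edge_ends L e)) (snd (edge_ends L e))"

definition MD :: "polygon list \<Rightarrow> nat \<times> nat \<Rightarrow> nat \<times> nat \<Rightarrow> real" where
  "MD L e e' = setdist (edge_seg L e) (edge_seg L e')"

definition share_vertex :: "polygon list \<Rightarrow> nat \<times> nat \<Rightarrow> nat \<times> nat \<Rightarrow> bool" where
  "share_vertex L e e' \<longleftrightarrow>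
     {fst (edge_ends L e), snd (edge_ends L e)} \<inter> {fst (edge_ends L e'), snd (edge_ends L e')} \<noteq> {}"

definition md_energy :: "polygon list \<Rightarrow> real" where
  "md_energy L = (\<Sum>(e, e') \<in> {(e, e'). e \<in> link_edges L \<and> e' \<in> link_edges L \<and> e \<noteq> e'
                                     \<and> \<not> share_vertex L e e'}.
                    edge_len L e * edge_len L e' / (MD L e e')\<^sup>2)"

definition rect1 :: "real \<Rightarrow> polygon" where
  "rect1 \<alpha> = [vector [1/2, \<alpha>/2, 0], vector [-1/2, \<alpha>/2, 0],
               vector [-1/2, -\<alpha>/2, 0], vector [1/2, -\<alpha>/2, 0]]"

definition rect2 :: "real \<Rightarrow> polygon" where
  "rect2 \<alpha> = [vector [\<alpha>/2, 0, 1/2], vector [-\<alpha>/2, 0, 1/2],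
               vector [-\<alpha>/2, 0, -1/2], vector [\<alpha>/2, 0, -1/2]]"

definition rect3 :: "real \<Rightarrow> polygon" where
  "rect3 \<alpha> = [vector [0, 1/2, \<alpha>/2], vector [0, -1/2, \<alpha>/2],
               vector [0, -1/2, -\<alpha>/2], vector [0, 1/2, -\<alpha>/2]]"

definition borromean :: "real \<Rightarrow> polygon list" where
  "borromean \<alpha> = [rect1 \<alpha>, rect2 \<alpha>, rect3 \<alpha>]"

definition E_B :: "real \<Rightarrow> real" where
  "E_B \<alpha> = 6 * (17 * \<alpha>\<^sup>2 + 16 * \<alpha> / (\<alpha>\<^sup>2 + 1) + 16 / (2 * \<alpha>\<^sup>2 - 2 * \<alpha> + 1)
              + 8 * \<alpha> / (\<alpha> - 1)\<^sup>2 + 8 * \<alpha> / (\<alpha> + 1)\<^sup>2 + 1 / \<alpha>\<^sup>2)"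

end

theory Submission
  imports Defs
begin

lemma dist_vec3: "dist (x::real^3) y = sqrt ((x$1 - y$1)^2 + (x$2 - y$2)^2 + (x$3 - y$3)^2)"
  by (simp add: dist_vec_def L2_set_def sum_3 dist_real_def)

lemma seg_coord:
  assumes "x \<in> closed_segment p (q::real^3)"
  shows "min (p$i) (q$i) \<le> x$i \<and> x$i \<le> max (p$i) (q$i)"
proof -
  obtain u where u: "0 \<le> u" "u \<le> 1" "x = (1-u) *\<^sub>R p + u *\<^sub>R q"
    using assms by (auto simp: closed_segment_def)
  have xi: "x$i = (1-u) * p$i + u * q$i" using u(3) by simp
  have "min (p$i) (q$i) = (1-u) * min (p$i) (q$i) + u * min (p$i) (q$i)" by algebra
  also have "\<dots> \<le> x$i" unfolding xi
    by (intro add_mono mult_left_mono) (use u in auto)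
  finally have a: "min (p$i) (q$i) \<le> x$i" .
  have "x$i \<le> (1-u) * max (p$i) (q$i) + u * max (p$i) (q$i)" unfolding xi
    by (intro add_mono mult_left_mono) (use u in auto)
  also have "\<dots> = max (p$i) (q$i)" by (simp add: algebra_simps)
  finally show ?thesis using a by simp
qed

lemma box_in_seg:
  assumes ax: "\<And>i::3. i \<noteq> k \<Longrightarrow> p$i = q$i"
    and x: "\<And>i. min (p$i) (q$i) \<le> x$i \<and> x$i \<le> max (p$i) (q$i)"
  shows "x \<in> closed_segment p (q::real^3)"
proof (cases "p$k = q$k")
  case True
  then have "x = p" using ax x by (metis antisym max.idem min.idem vec_eq_iff)
  then show ?thesis by simp
next
  case False
  define u where "u = (x$k - p$k) / (q$k - p$k)"
  have u01: "0 \<le> u \<and> u \<le> 1" using x[of k] False unfolding u_def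
    by (cases "p$k < q$k") (auto simp: divide_simps min_def max_def split: if_splits)
  have "x = (1-u) *\<^sub>R p + u *\<^sub>R q"
  proof (subst vec_eq_iff, intro allI)
    fix i show "x$i = ((1-u) *\<^sub>R p + u *\<^sub>R q)$i"
    proof (cases "i = k")
      case True
      have "((1-u) *\<^sub>R p + u *\<^sub>R q)$k = p$k + u*(q$k-p$k)" by (simp add: algebra_simps)
      moreover have "u*(q$k-p$k) = x$k - p$k" using False by (simp add: u_def)
      ultimately show ?thesis using True by simp
    next
      case F: False
      then have "x$i = p$i" using ax[OF F] x[of i] by (simp add: min_def max_def split: if_splits)
      then show ?thesis using ax[OF F] by (simp add: algebra_simps)
    qed
  qed
  then show ?thesis using u01 unfolding closed_segment_def by blast
qed

definition gap :: "real \<Rightarrow> real \<Rightarrow> real \<Rightarrow> real \<Rightarrow> real" where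
  "gap a b c d = max 0 (max (c - b) (a - d))"

lemma gap_le: "a \<le> x \<Longrightarrow> x \<le> b \<Longrightarrow> c \<le> y \<Longrightarrow> y \<le> d \<Longrightarrow> gap a b c d \<le> \<bar>x - y\<bar>"
  by (auto simp: gap_def)

lemma gap_attained: "a \<le> b \<Longrightarrow> c \<le> d \<Longrightarrow> \<exists>x y. a \<le> x \<and> x \<le> b \<and> c \<le> y \<and> y \<le> d \<and> \<bar>x - y\<bar> = gap a b c d"
proof -
  assume h: "a \<le> b" "c \<le> d"
  show ?thesis
  proof (cases "b < c")
    case True then show ?thesis using h by (intro exI[of _ b] exI[of _ c]) (auto simp: gap_def)
  next
    case F: False
    show ?thesis
    proof (cases "d < a")
      case True then show ?thesis using h by (intro exI[of _ a] exI[of _ d]) (auto simp: gap_def)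
    next
      case False then show ?thesis using h F by (intro exI[of _ "max a c"] exI[of _ "max a c"]) (auto simp: gap_def)
    qed
  qed
qed

lemma seg_setdist:
  fixes p q r s :: "real^3"
  assumes ax1: "\<And>i::3. i \<noteq> k \<Longrightarrow> p$i = q$i" and ax2: "\<And>i::3. i \<noteq> k' \<Longrightarrow> r$i = s$i"
  defines "g \<equiv> \<lambda>i. gap (min (p$i) (q$i)) (max (p$i) (q$i)) (min (r$i) (s$i)) (max (r$i) (s$i))"
  shows "setdist (closed_segment p q) (closed_segment r s) = sqrt ((g 1)^2 + (g 2)^2 + (g 3)^2)"
proof (rule antisym)
  have "\<forall>i. \<exists>xy. min (p$i) (q$i) \<le> fst xy \<and> fst xy \<le> max (p$i) (q$i) \<and> min (r$i) (s$i) \<le> snd xy \<and> snd xy \<le> max (r$i) (s$i) \<and> \<bar>fst xy - snd xy\<bar> = g i"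
    using gap_attained unfolding g_def by fastforce
  then obtain f where f: "\<And>i. min (p$i) (q$i) \<le> fst (f i) \<and> fst (f i) \<le> max (p$i) (q$i) \<and> min (r$i) (s$i) \<le> snd (f i) \<and> snd (f i) \<le> max (r$i) (s$i) \<and> \<bar>fst (f i) - snd (f i)\<bar> = g i"
    by metis
  define x where "x = (\<chi> i. fst (f i))"
  define y where "y = (\<chi> i. snd (f i))"
  have xs: "x \<in> closed_segment p q" unfolding x_def by (rule box_in_seg[where k=k], erule ax1, unfold vec_lambda_beta, rule conjI, rule conjunct1[OF f], rule conjunct1[OF conjunct2[OF f]])
  have ys: "y \<in> closed_segment r s" unfolding y_def by (rule box_in_seg[where k=k'], erule ax2, unfold vec_lambda_beta, rule conjI, rule conjunct1[OF conjunct2[OF conjunct2[OF f]]], rule conjunct1[OF conjunct2[OF conjunct2[OF conjunct2[OF f]]]])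
  have "dist x y = sqrt ((g 1)^2 + (g 2)^2 + (g 3)^2)"
  proof -
    have e: "(fst (f i) - snd (f i))^2 = (g i)^2" for i
    proof -
      have "\<bar>fst (f i) - snd (f i)\<bar> = g i" using f[of i] by blast
      then show ?thesis by (metis power2_abs)
    qed
    show ?thesis unfolding dist_vec3 x_def y_def vec_lambda_beta e ..
  qed
  then show "setdist (closed_segment p q) (closed_segment r s) \<le> sqrt ((g 1)^2 + (g 2)^2 + (g 3)^2)"
    using setdist_le_dist[OF xs ys] by simp
next
  show "sqrt ((g 1)^2 + (g 2)^2 + (g 3)^2) \<le> setdist (closed_segment p q) (closed_segment r s)"
  proof (rule le_setdistI)
    fix x y assume x: "x \<in> closed_segment p q" and y: "y \<in> closed_segment r s"
    have gi: "(g i)^2 \<le> (x$i - y$i)^2" for i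
    proof -
      have "0 \<le> g i" by (simp add: g_def gap_def)
      moreover have "g i \<le> \<bar>x$i - y$i\<bar>" unfolding g_def
        using seg_coord[OF x, of i] seg_coord[OF y, of i] by (intro gap_le) auto
      ultimately show ?thesis by (metis abs_le_square_iff abs_of_nonneg)
    qed
    show "sqrt ((g 1)^2 + (g 2)^2 + (g 3)^2) \<le> dist x y" unfolding dist_vec3
      by (intro real_sqrt_le_mono add_mono gi)
  qed auto
qed

lemma vector3_eq: "(vector [a,b,c] :: real^3) = vector [d,e,f] \<longleftrightarrow> a = d \<and> b = e \<and> c = f"
  by (auto simp: vec_eq_iff forall_3)

lemma dist_vector3: "dist (vector [a,b,c] :: real^3) (vector [d,e,f]) = sqrt ((a-d)^2 + (b-e)^2 + (c-f)^2)"
  by (simp add: dist_vec3)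

lemma setdist_vector3:
  assumes "(p1 = q1 \<and> p2 = q2) \<or> (p1 = q1 \<and> p3 = q3) \<or> (p2 = q2 \<and> p3 = q3)"
      and "(r1 = s1 \<and> r2 = s2) \<or> (r1 = s1 \<and> r3 = s3) \<or> (r2 = s2 \<and> r3 = s3)"
  shows "(setdist (closed_segment (vector [p1,p2,p3]) (vector [q1,q2,q3] :: real^3))
                  (closed_segment (vector [r1,r2,r3]) (vector [s1,s2,s3])))^2
       = (gap (min p1 q1) (max p1 q1) (min r1 s1) (max r1 s1))^2
       + (gap (min p2 q2) (max p2 q2) (min r2 s2) (max r2 s2))^2
       + (gap (min p3 q3) (max p3 q3) (min r3 s3) (max r3 s3))^2"
proof -
  have ex1: "\<exists>k. \<forall>i::3. i \<noteq> k \<longrightarrow> (vector [p1,p2,p3] :: real^3)$i = (vector [q1,q2,q3] :: real^3)$i"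
    using assms(1) by (elim disjE) (auto intro: exI[of _ 3] exI[of _ 2] exI[of _ 1] simp: forall_3)
  have ex2: "\<exists>k. \<forall>i::3. i \<noteq> k \<longrightarrow> (vector [r1,r2,r3] :: real^3)$i = (vector [s1,s2,s3] :: real^3)$i"
    using assms(2) by (elim disjE) (auto intro: exI[of _ 3] exI[of _ 2] exI[of _ 1] simp: forall_3)
  obtain k k' where k: "\<And>i::3. i \<noteq> k \<Longrightarrow> (vector [p1,p2,p3] :: real^3)$i = (vector [q1,q2,q3] :: real^3)$i"
    and k': "\<And>i::3. i \<noteq> k' \<Longrightarrow> (vector [r1,r2,r3] :: real^3)$i = (vector [s1,s2,s3] :: real^3)$i"
    using ex1 ex2 by blast
  show ?thesis
  proof -
    let ?G = "(gap (min p1 q1) (max p1 q1) (min r1 s1) (max r1 s1))^2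
       + (gap (min p2 q2) (max p2 q2) (min r2 s2) (max r2 s2))^2
       + (gap (min p3 q3) (max p3 q3) (min r3 s3) (max r3 s3))^2"
    have "setdist (closed_segment (vector [p1,p2,p3]) (vector [q1,q2,q3] :: real^3))
                  (closed_segment (vector [r1,r2,r3]) (vector [s1,s2,s3])) = sqrt ?G"
      using seg_setdist[where k=k and k'=k', OF k k'] by simp
    moreover have "0 \<le> ?G" by (intro add_nonneg_nonneg zero_le_power2)
    ultimately show ?thesis by simp
  qed
qed

definition T :: "polygon list \<Rightarrow> nat \<times> nat \<Rightarrow> nat \<times> nat \<Rightarrow> real" where
  "T L e e' = (if e \<noteq> e' \<and> \<not> share_vertex L e e' then edge_len L e * edge_len L e' / (MD L e e')\<^sup>2 else 0)"

lemma finite_link_edges: "finite (link_edges L)"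
proof -
  have "link_edges L = Sigma {..<length L} (\<lambda>k. {..<length (L!k)})"
    by (auto simp: link_edges_def)
  then show ?thesis by auto
qed

lemma md_energy_sum: "md_energy L = (\<Sum>e\<in>link_edges L. \<Sum>e'\<in>link_edges L. T L e e')"
proof -
  have "{(e, e'). e \<in> link_edges L \<and> e' \<in> link_edges L \<and> e \<noteq> e' \<and> \<not> share_vertex L e e'}
        = Set.filter (\<lambda>(e,e'). e \<noteq> e' \<and> \<not> share_vertex L e e') (link_edges L \<times> link_edges L)"
    by auto
  then show ?thesis
    unfolding md_energy_def T_def
    by (simp add: sum.inter_filter finite_link_edges sum.cartesian_product case_prod_unfold)
qed

lemma blk00:
  assumes a: "1 < \<alpha>"
  shows "(\<Sum>i<4. \<Sum>i'<4. T (borromean \<alpha>) (0,i) (0,i')) = 2 * (\<alpha>\<^sup>2 + 1 / \<alpha>\<^sup>2)"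
  using a
  apply (simp add: T_def share_vertex_def edge_ends_def edge_len_def MD_def edge_seg_def borromean_def rect1_def rect2_def rect3_def lessThan_nat_numeral vector3_eq dist_vector3 setdist_vector3 gap_def)
  apply (simp add: field_simps power2_eq_square)
  done

lemma blk01:
  assumes a: "1 < \<alpha>"
  shows "(\<Sum>i<4. \<Sum>i'<4. T (borromean \<alpha>) (0,i) (1,i')) = 16*\<alpha>\<^sup>2 + 16*\<alpha>/(\<alpha>\<^sup>2+1) + 16/(2*\<alpha>\<^sup>2-2*\<alpha>+1) + 8*\<alpha>/(\<alpha>-1)\<^sup>2 + 8*\<alpha>/(\<alpha>+1)\<^sup>2"
  using a
  apply (simp add: T_def share_vertex_def edge_ends_def edge_len_def MD_def edge_seg_def borromean_def rect1_def rect2_def rect3_def lessThan_nat_numeral vector3_eq dist_vector3 setdist_vector3 gap_def)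
  apply (simp add: field_simps power2_eq_square)
  done

lemma blk02:
  assumes a: "1 < \<alpha>"
  shows "(\<Sum>i<4. \<Sum>i'<4. T (borromean \<alpha>) (0,i) (2,i')) = 16*\<alpha>\<^sup>2 + 16*\<alpha>/(\<alpha>\<^sup>2+1) + 16/(2*\<alpha>\<^sup>2-2*\<alpha>+1) + 8*\<alpha>/(\<alpha>-1)\<^sup>2 + 8*\<alpha>/(\<alpha>+1)\<^sup>2"
  using a
  apply (simp add: T_def share_vertex_def edge_ends_def edge_len_def MD_def edge_seg_def borromean_def rect1_def rect2_def rect3_def lessThan_nat_numeral vector3_eq dist_vector3 setdist_vector3 gap_def)
  apply (simp add: field_simps power2_eq_square)
  done

lemma blk10:
  assumes a: "1 < \<alpha>"
  shows "(\<Sum>i<4. \<Sum>i'<4. T (borromean \<alpha>) (1,i) (0,i')) = 16*\<alpha>\<^sup>2 + 16*\<alpha>/(\<alpha>\<^sup>2+1) + 16/(2*\<alpha>\<^sup>2-2*\<alpha>+1) + 8*\<alpha>/(\<alpha>-1)\<^sup>2 + 8*\<alpha>/(\<alpha>+1)\<^sup>2"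
  using a
  apply (simp add: T_def share_vertex_def edge_ends_def edge_len_def MD_def edge_seg_def borromean_def rect1_def rect2_def rect3_def lessThan_nat_numeral vector3_eq dist_vector3 setdist_vector3 gap_def)
  apply (simp add: field_simps power2_eq_square)
  done

lemma blk11:
  assumes a: "1 < \<alpha>"
  shows "(\<Sum>i<4. \<Sum>i'<4. T (borromean \<alpha>) (1,i) (1,i')) = 2 * (\<alpha>\<^sup>2 + 1 / \<alpha>\<^sup>2)"
  using a
  apply (simp add: T_def share_vertex_def edge_ends_def edge_len_def MD_def edge_seg_def borromean_def rect1_def rect2_def rect3_def lessThan_nat_numeral vector3_eq dist_vector3 setdist_vector3 gap_def)
  apply (simp add: field_simps power2_eq_square)
  done

lemma blk12:
  assumes a: "1 < \<alpha>"
  shows "(\<Sum>i<4. \<Sum>i'<4. T (borromean \<alpha>) (1,i) (2,i')) = 16*\<alpha>\<^sup>2 + 16*\<alpha>/(\<alpha>\<^sup>2+1) + 16/(2*\<alpha>\<^sup>2-2*\<alpha>+1) + 8*\<alpha>/(\<alpha>-1)\<^sup>2 + 8*\<alpha>/(\<alpha>+1)\<^sup>2"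
  using a
  apply (simp add: T_def share_vertex_def edge_ends_def edge_len_def MD_def edge_seg_def borromean_def rect1_def rect2_def rect3_def lessThan_nat_numeral vector3_eq dist_vector3 setdist_vector3 gap_def)
  apply (simp add: field_simps power2_eq_square)
  done

lemma blk20:
  assumes a: "1 < \<alpha>"
  shows "(\<Sum>i<4. \<Sum>i'<4. T (borromean \<alpha>) (2,i) (0,i')) = 16*\<alpha>\<^sup>2 + 16*\<alpha>/(\<alpha>\<^sup>2+1) + 16/(2*\<alpha>\<^sup>2-2*\<alpha>+1) + 8*\<alpha>/(\<alpha>-1)\<^sup>2 + 8*\<alpha>/(\<alpha>+1)\<^sup>2"
  using a
  apply (simp add: T_def share_vertex_def edge_ends_def edge_len_def MD_def edge_seg_def borromean_def rect1_def rect2_def rect3_def lessThan_nat_numeral vector3_eq dist_vector3 setdist_vector3 gap_def)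
  apply (simp add: field_simps power2_eq_square)
  done

lemma blk21:
  assumes a: "1 < \<alpha>"
  shows "(\<Sum>i<4. \<Sum>i'<4. T (borromean \<alpha>) (2,i) (1,i')) = 16*\<alpha>\<^sup>2 + 16*\<alpha>/(\<alpha>\<^sup>2+1) + 16/(2*\<alpha>\<^sup>2-2*\<alpha>+1) + 8*\<alpha>/(\<alpha>-1)\<^sup>2 + 8*\<alpha>/(\<alpha>+1)\<^sup>2"
  using a
  apply (simp add: T_def share_vertex_def edge_ends_def edge_len_def MD_def edge_seg_def borromean_def rect1_def rect2_def rect3_def lessThan_nat_numeral vector3_eq dist_vector3 setdist_vector3 gap_def)
  apply (simp add: field_simps power2_eq_square)
  done

lemma blk22:
  assumes a: "1 < \<alpha>"
  shows "(\<Sum>i<4. \<Sum>i'<4. T (borromean \<alpha>) (2,i) (2,i')) = 2 * (\<alpha>\<^sup>2 + 1 / \<alpha>\<^sup>2)"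
  using a
  apply (simp add: T_def share_vertex_def edge_ends_def edge_len_def MD_def edge_seg_def borromean_def rect1_def rect2_def rect3_def lessThan_nat_numeral vector3_eq dist_vector3 setdist_vector3 gap_def)
  apply (simp add: field_simps power2_eq_square)
  done

lemma single1:
  assumes a: "1 < \<alpha>"
  shows "(\<Sum>i<4. \<Sum>i'<4. T [rect1 \<alpha>] (0,i) (0,i')) = 2 * (\<alpha>\<^sup>2 + 1 / \<alpha>\<^sup>2)"
  using a
  apply (simp add: T_def share_vertex_def edge_ends_def edge_len_def MD_def edge_seg_def borromean_def rect1_def rect2_def rect3_def lessThan_nat_numeral vector3_eq dist_vector3 setdist_vector3 gap_def)
  apply (simp add: field_simps power2_eq_square)
  done

lemma single2:
  assumes a: "1 < \<alpha>"
  shows "(\<Sum>i<4. \<Sum>i'<4. T [rect2 \<alpha>] (0,i) (0,i')) = 2 * (\<alpha>\<^sup>2 + 1 / \<alpha>\<^sup>2)"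
  using a
  apply (simp add: T_def share_vertex_def edge_ends_def edge_len_def MD_def edge_seg_def borromean_def rect1_def rect2_def rect3_def lessThan_nat_numeral vector3_eq dist_vector3 setdist_vector3 gap_def)
  apply (simp add: field_simps power2_eq_square)
  done

lemma single3:
  assumes a: "1 < \<alpha>"
  shows "(\<Sum>i<4. \<Sum>i'<4. T [rect3 \<alpha>] (0,i) (0,i')) = 2 * (\<alpha>\<^sup>2 + 1 / \<alpha>\<^sup>2)"
  using a
  apply (simp add: T_def share_vertex_def edge_ends_def edge_len_def MD_def edge_seg_def borromean_def rect1_def rect2_def rect3_def lessThan_nat_numeral vector3_eq dist_vector3 setdist_vector3 gap_def)
  apply (simp add: field_simps power2_eq_square)
  done

lemma sum_prod_split: "(\<Sum>e\<in>A\<times>B. f e) = (\<Sum>k\<in>A. \<Sum>i\<in>B. f (k,i))"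
  by (simp add: sum.cartesian_product)

lemma energy_blocks:
  assumes "link_edges L = {..<n} \<times> {..<4}"
  shows "md_energy L = (\<Sum>k<n. \<Sum>k'<n. \<Sum>i<4. \<Sum>i'<4. T L (k,i) (k',i'))"
  unfolding md_energy_sum assms sum_prod_split
  by (subst sum.swap) (rule refl)

lemma less3: "(k::nat) < 3 \<longleftrightarrow> k = 0 \<or> k = 1 \<or> k = 2" by auto
lemma less1: "(k::nat) < 1 \<longleftrightarrow> k = 0" by auto
lemma less4: "(k::nat) < 4 \<longleftrightarrow> k = 0 \<or> k = 1 \<or> k = 2 \<or> k = 3" by auto

lemma sum3: "(\<Sum>k<(3::nat). f k) = f 0 + f 1 + f 2" by (simp add: numeral_3_eq_3 numeral_2_eq_2)

lemma energy_B: "1 < \<alpha> \<Longrightarrow> md_energy (borromean \<alpha>) = E_B \<alpha>"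
proof -
  assume a: "1 < \<alpha>"
  have l: "k < 3 \<Longrightarrow> length (borromean \<alpha> ! k) = 4" for k
    by (auto simp: less3 borromean_def rect1_def rect2_def rect3_def)
  have l3: "length (borromean \<alpha>) = 3" by (simp add: borromean_def)
  have "link_edges (borromean \<alpha>) = {..<3} \<times> {..<4}"
    by (auto simp: link_edges_def l l3)
  from energy_blocks[OF this]
  have e: "md_energy (borromean \<alpha>) = (\<Sum>k<3. \<Sum>k'<3. blk k k')"
    if "\<And>k k'. blk k k' = (\<Sum>i<4. \<Sum>i'<4. T (borromean \<alpha>) (k,i) (k',i'))" for blk
    by (simp only: that)
  define blk where "blk k k' = (\<Sum>i<4. \<Sum>i'<4. T (borromean \<alpha>) (k,i) (k',i'))" for k k'
  have e2: "md_energy (borromean \<alpha>) = (\<Sum>k<3. \<Sum>k'<3. blk k k')"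
    by (rule e) (simp add: blk_def)
  have b00: "blk 0 0 = 2 * (\<alpha>\<^sup>2 + 1 / \<alpha>\<^sup>2)" unfolding blk_def by (rule blk00[OF a])
  have b01: "blk 0 1 = 16*\<alpha>\<^sup>2 + 16*\<alpha>/(\<alpha>\<^sup>2+1) + 16/(2*\<alpha>\<^sup>2-2*\<alpha>+1) + 8*\<alpha>/(\<alpha>-1)\<^sup>2 + 8*\<alpha>/(\<alpha>+1)\<^sup>2" unfolding blk_def by (rule blk01[OF a])
  have b02: "blk 0 2 = 16*\<alpha>\<^sup>2 + 16*\<alpha>/(\<alpha>\<^sup>2+1) + 16/(2*\<alpha>\<^sup>2-2*\<alpha>+1) + 8*\<alpha>/(\<alpha>-1)\<^sup>2 + 8*\<alpha>/(\<alpha>+1)\<^sup>2" unfolding blk_def by (rule blk02[OF a])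
  have b10: "blk 1 0 = 16*\<alpha>\<^sup>2 + 16*\<alpha>/(\<alpha>\<^sup>2+1) + 16/(2*\<alpha>\<^sup>2-2*\<alpha>+1) + 8*\<alpha>/(\<alpha>-1)\<^sup>2 + 8*\<alpha>/(\<alpha>+1)\<^sup>2" unfolding blk_def by (rule blk10[OF a])
  have b11: "blk 1 1 = 2 * (\<alpha>\<^sup>2 + 1 / \<alpha>\<^sup>2)" unfolding blk_def by (rule blk11[OF a])
  have b12: "blk 1 2 = 16*\<alpha>\<^sup>2 + 16*\<alpha>/(\<alpha>\<^sup>2+1) + 16/(2*\<alpha>\<^sup>2-2*\<alpha>+1) + 8*\<alpha>/(\<alpha>-1)\<^sup>2 + 8*\<alpha>/(\<alpha>+1)\<^sup>2" unfolding blk_def by (rule blk12[OF a])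
  have b20: "blk 2 0 = 16*\<alpha>\<^sup>2 + 16*\<alpha>/(\<alpha>\<^sup>2+1) + 16/(2*\<alpha>\<^sup>2-2*\<alpha>+1) + 8*\<alpha>/(\<alpha>-1)\<^sup>2 + 8*\<alpha>/(\<alpha>+1)\<^sup>2" unfolding blk_def by (rule blk20[OF a])
  have b21: "blk 2 1 = 16*\<alpha>\<^sup>2 + 16*\<alpha>/(\<alpha>\<^sup>2+1) + 16/(2*\<alpha>\<^sup>2-2*\<alpha>+1) + 8*\<alpha>/(\<alpha>-1)\<^sup>2 + 8*\<alpha>/(\<alpha>+1)\<^sup>2" unfolding blk_def by (rule blk21[OF a])
  have b22: "blk 2 2 = 2 * (\<alpha>\<^sup>2 + 1 / \<alpha>\<^sup>2)" unfolding blk_def by (rule blk22[OF a])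
  show ?thesis unfolding e2
    unfolding sum3 b00 b01 b02 b10 b11 b12 b20 b21 b22 E_B_def by (simp add: algebra_simps)
qed

lemma sum1: "(\<Sum>k<(1::nat). f k) = f 0" by simp

lemma energy_single:
  "1 < \<alpha> \<Longrightarrow> md_energy [rect1 \<alpha>] = 2 * (\<alpha>\<^sup>2 + 1 / \<alpha>\<^sup>2)"
  "1 < \<alpha> \<Longrightarrow> md_energy [rect2 \<alpha>] = 2 * (\<alpha>\<^sup>2 + 1 / \<alpha>\<^sup>2)"
  "1 < \<alpha> \<Longrightarrow> md_energy [rect3 \<alpha>] = 2 * (\<alpha>\<^sup>2 + 1 / \<alpha>\<^sup>2)"
proof -
  assume a: "1 < \<alpha>"
  have "link_edges [rect1 \<alpha>] = {..<1} \<times> {..<4}" "link_edges [rect2 \<alpha>] = {..<1} \<times> {..<4}"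
       "link_edges [rect3 \<alpha>] = {..<1} \<times> {..<4}"
    by (auto simp: link_edges_def rect1_def rect2_def rect3_def less1)
  then show "md_energy [rect1 \<alpha>] = 2 * (\<alpha>\<^sup>2 + 1 / \<alpha>\<^sup>2)" "md_energy [rect2 \<alpha>] = 2 * (\<alpha>\<^sup>2 + 1 / \<alpha>\<^sup>2)"
    "md_energy [rect3 \<alpha>] = 2 * (\<alpha>\<^sup>2 + 1 / \<alpha>\<^sup>2)"
    using single1[OF a] single2[OF a] single3[OF a] by (simp_all only: energy_blocks sum1)
qed

definition Np :: "real \<Rightarrow> real" where
  "Np x = (2) + x * ((-8) + x * ((14) + x * ((-72) + x * ((146) + x * ((-120) + x * ((174) + x * ((-744) + x * ((1886) + x * ((-3528) + x * ((3586) + x * ((-2136) + x * ((390) + x * ((216) + x * ((-326) + x * ((8) + x * ((136) + x * ((-272) + x * ((136)))))))))))))))))))"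

lemma R1: "(2) * (4391 + u)^0 * 2500^18 + (-8) * (4391 + u)^1 * 2500^17 + (14) * (4391 + u)^2 * 2500^16 + (-72) * (4391 + u)^3 * 2500^15 + (146) * (4391 + u)^4 * 2500^14 + (-120) * (4391 + u)^5 * 2500^13 + (174) * (4391 + u)^6 * 2500^12 + (-744) * (4391 + u)^7 * 2500^11 + (1886) * (4391 + u)^8 * 2500^10 + (-3528) * (4391 + u)^9 * 2500^9 + (3586) * (4391 + u)^10 * 2500^8 + (-2136) * (4391 + u)^11 * 2500^7 + (390) * (4391 + u)^12 * 2500^6 + (216) * (4391 + u)^13 * 2500^5 + (-326) * (4391 + u)^14 * 2500^4 + (8) * (4391 + u)^15 * 2500^3 + (136) * (4391 + u)^16 * 2500^2 + (-272) * (4391 + u)^17 * 2500^1 + (136) * (4391 + u)^18 * 2500^0 = 15024546000454820007779421134918799148512050551892871488262867656 + u * (14738433557836663286802702678016839527028593243352751537830605488 + u * (53939717898494936595970024748678639927978182167030232200230728 + u * (93779887286407761085646952328512031813777107754466394408576 + u * (102660130817720730648263793525244198859275470218366745760 + u * (79165960439039896680690430068144165904174532600563008 + u * (45602803273330414350801415316689861970071845025824 + u * (20307153175778000471509132731815090223998730624 + u * (7136787957248025917877995043306799676770288 + u * (2003176985679722110497047194908796287520 + u * (451452149934810548993539858308008048 + u * (81664907199603525394855299917184 + u * (11786497146226634575345484064 + u * (1340256223536702046486848 + u * (117522745867194361760 + u * (7672235509037696 + u * (351286611848 + u * (10069168 + u * (136))))))))))))))))))" for u :: real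
  by algebra

lemma L1: "(2) * (4389*P + 2500*Q)^0 * (2500*(P+Q))^18 + (-8) * (4389*P + 2500*Q)^1 * (2500*(P+Q))^17 + (14) * (4389*P + 2500*Q)^2 * (2500*(P+Q))^16 + (-72) * (4389*P + 2500*Q)^3 * (2500*(P+Q))^15 + (146) * (4389*P + 2500*Q)^4 * (2500*(P+Q))^14 + (-120) * (4389*P + 2500*Q)^5 * (2500*(P+Q))^13 + (174) * (4389*P + 2500*Q)^6 * (2500*(P+Q))^12 + (-744) * (4389*P + 2500*Q)^7 * (2500*(P+Q))^11 + (1886) * (4389*P + 2500*Q)^8 * (2500*(P+Q))^10 + (-3528) * (4389*P + 2500*Q)^9 * (2500*(P+Q))^9 + (3586) * (4389*P + 2500*Q)^10 * (2500*(P+Q))^8 + (-2136) * (4389*P + 2500*Q)^11 * (2500*(P+Q))^7 + (390) * (4389*P + 2500*Q)^12 * (2500*(P+Q))^6 + (216) * (4389*P + 2500*Q)^13 * (2500*(P+Q))^5 + (-326) * (4389*P + 2500*Q)^14 * (2500*(P+Q))^4 + (8) * (4389*P + 2500*Q)^15 * (2500*(P+Q))^3 + (136) * (4389*P + 2500*Q)^16 * (2500*(P+Q))^2 + (-272) * (4389*P + 2500*Q)^17 * (2500*(P+Q))^1 + (136) * (4389*P + 2500*Q)^18 * (2500*(P+Q))^0 = - ((7450580596923828125000000000000000000000000000000000000000000000) * P^0 * Q^18 + (196036696434020996093750000000000000000000000000000000000000000000) * P^1 * Q^17 + (2441530559659004211425781250000000000000000000000000000000000000000) * P^2 * Q^16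 + (19119573448687553405761718750000000000000000000000000000000000000000) * P^3 * Q^15 + (105453612082498708415031433105468750000000000000000000000000000000000) * P^4 * Q^14 + (434763833924628385580663681030273437500000000000000000000000000000000) * P^5 * Q^13 + (1387432977862209757359814826965332031250000000000000000000000000000000) * P^6 * Q^12 + (3500446694472468875692738337420654296875000000000000000000000000000000) * P^7 * Q^11 + (7067892869484998864560055276655302276611328125000000000000000000000000) * P^8 * Q^10 + (11484562244205409830993167702595055187683105468750000000000000000000000) * P^9 * Q^9 + (15014367295476100161061087923072683873641931152343750000000000000000000) * P^10 * Q^8 + (15699670091417985172083368413672170570781674785156250000000000000000000) * P^11 * Q^7 + (12965964099923836351122252105022963772860782254526367187500000000000000) * P^12 * Q^6 + (8278127343481904942224481859763244004394194756114720703125000000000000) * P^13 * Q^5 + (3944748144989644175351560795197300453602465927358598817421875000000000) * P^14 * Q^4 + (1321850506913697214997595181613137454037735569810716047771375000000000) * P^15 * Q^3 + (278105817221153248765506010017254817408172930719858781393253000000000) * P^16 * Q^2 + (27691723686313327508512044007680837798548344751199808816067882240000) * P^17 * Q^1 + (14237310842691119750128496419807173175877622910029120343932753784) * P^18 * Q^0)" for P Q :: real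
  by algebra

lemma S1: "2500^18 * Np x = (2) * (4391 + (2500*x - 4391))^0 * 2500^18 + (-8) * (4391 + (2500*x - 4391))^1 * 2500^17 + (14) * (4391 + (2500*x - 4391))^2 * 2500^16 + (-72) * (4391 + (2500*x - 4391))^3 * 2500^15 + (146) * (4391 + (2500*x - 4391))^4 * 2500^14 + (-120) * (4391 + (2500*x - 4391))^5 * 2500^13 + (174) * (4391 + (2500*x - 4391))^6 * 2500^12 + (-744) * (4391 + (2500*x - 4391))^7 * 2500^11 + (1886) * (4391 + (2500*x - 4391))^8 * 2500^10 + (-3528) * (4391 + (2500*x - 4391))^9 * 2500^9 + (3586) * (4391 + (2500*x - 4391))^10 * 2500^8 + (-2136) * (4391 + (2500*x - 4391))^11 * 2500^7 + (390) * (4391 + (2500*x - 4391))^12 * 2500^6 + (216) * (4391 + (2500*x - 4391))^13 * 2500^5 + (-326) * (4391 + (2500*x - 4391))^14 * 2500^4 + (8) * (4391 + (2500*x - 4391))^15 * 2500^3 + (136) * (4391 + (2500*x - 4391))^16 * 2500^2 + (-272) * (4391 + (2500*x - 4391))^17 * 2500^1 + (136) * (4391 + (2500*x - 4391))^18 * 2500^0"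
  unfolding Np_def by algebra

lemma S2: "(2500*1889)^18 * Np x = (2) * (4389*(2500*x - 2500) + 2500*(4389 - 2500*x))^0 * (2500*((2500*x - 2500)+(4389 - 2500*x)))^18 + (-8) * (4389*(2500*x - 2500) + 2500*(4389 - 2500*x))^1 * (2500*((2500*x - 2500)+(4389 - 2500*x)))^17 + (14) * (4389*(2500*x - 2500) + 2500*(4389 - 2500*x))^2 * (2500*((2500*x - 2500)+(4389 - 2500*x)))^16 + (-72) * (4389*(2500*x - 2500) + 2500*(4389 - 2500*x))^3 * (2500*((2500*x - 2500)+(4389 - 2500*x)))^15 + (146) * (4389*(2500*x - 2500) + 2500*(4389 - 2500*x))^4 * (2500*((2500*x - 2500)+(4389 - 2500*x)))^14 + (-120) * (4389*(2500*x - 2500) + 2500*(4389 - 2500*x))^5 * (2500*((2500*x - 2500)+(4389 - 2500*x)))^13 + (174) * (4389*(2500*x - 2500) + 2500*(4389 - 2500*x))^6 * (2500*((2500*x - 2500)+(4389 - 2500*x)))^12 + (-744) * (4389*(2500*x - 2500) + 2500*(4389 - 2500*x))^7 * (2500*((2500*x - 2500)+(4389 - 2500*x)))^11 + (1886) * (4389*(2500*x - 2500) + 2500*(4389 - 2500*x))^8 * (2500*((2500*x - 2500)+(4389 - 2500*x)))^10 + (-3528) * (4389*(2500*x - 2500) + 2500*(4389 - 2500*x))^9 * (2500*((2500*x - 2500)+(4389 - 2500*x)))^9 + (3586) * (4389*(2500*x - 2500) + 2500*(4389 - 2500*x))^10 * (2500*((2500*x - 2500)+(4389 - 2500*x)))^8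 + (-2136) * (4389*(2500*x - 2500) + 2500*(4389 - 2500*x))^11 * (2500*((2500*x - 2500)+(4389 - 2500*x)))^7 + (390) * (4389*(2500*x - 2500) + 2500*(4389 - 2500*x))^12 * (2500*((2500*x - 2500)+(4389 - 2500*x)))^6 + (216) * (4389*(2500*x - 2500) + 2500*(4389 - 2500*x))^13 * (2500*((2500*x - 2500)+(4389 - 2500*x)))^5 + (-326) * (4389*(2500*x - 2500) + 2500*(4389 - 2500*x))^14 * (2500*((2500*x - 2500)+(4389 - 2500*x)))^4 + (8) * (4389*(2500*x - 2500) + 2500*(4389 - 2500*x))^15 * (2500*((2500*x - 2500)+(4389 - 2500*x)))^3 + (136) * (4389*(2500*x - 2500) + 2500*(4389 - 2500*x))^16 * (2500*((2500*x - 2500)+(4389 - 2500*x)))^2 + (-272) * (4389*(2500*x - 2500) + 2500*(4389 - 2500*x))^17 * (2500*((2500*x - 2500)+(4389 - 2500*x)))^1 + (136) * (4389*(2500*x - 2500) + 2500*(4389 - 2500*x))^18 * (2500*((2500*x - 2500)+(4389 - 2500*x)))^0"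
  unfolding Np_def by algebra

definition Dd :: "real \<Rightarrow> real" where
  "Dd x = x^3*(x-1)^3*(x+1)^3*(x^2+1)^2*(2*x^2-2*x+1)^2"

definition Ed :: "real \<Rightarrow> real" where
  "Ed x = 6 * (34*x + 16*(1-x^2)/(x^2+1)^2 + (-16)*(4*x-2)/(2*x^2-2*x+1)^2
             + (-8)*(x+1)/(x-1)^3 + 8*(1-x)/(x+1)^3 + (-2)/x^3)"

lemma quad_pos: "0 < 2*x^2-2*x+(1::real)"
proof -
  have "2*x^2-2*x+1 = x^2 + (x-1)^2" by (simp add: power2_eq_square algebra_simps)
  moreover have "0 < x^2 + (x-1)^2"
    by (cases "x = 0") (auto intro: add_pos_nonneg)
  ultimately show ?thesis by simp
qed

lemma E_B_deriv:
  assumes x: "1 < x"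
  shows "(E_B has_real_derivative Ed x) (at x)"
proof -
  have nz: "x \<noteq> 0" "x - 1 \<noteq> 0" "x + 1 \<noteq> 0" "x^2+1 \<noteq> 0" "2*x^2-2*x+1 \<noteq> 0"
    using x quad_pos[of x] by (auto simp: add_pos_nonneg)
  have d1: "((\<lambda>x. 17*x^2) has_real_derivative 34*x) (at x)"
    by (auto intro!: derivative_eq_intros)
  have d2: "((\<lambda>x. 16*x/(x^2+1)) has_real_derivative 16*(1-x^2)/(x^2+1)^2) (at x)"
    using nz by (auto intro!: derivative_eq_intros simp: field_simps power2_eq_square)
  have d3: "((\<lambda>x. 16/(2*x^2-2*x+1)) has_real_derivative (-16)*(4*x-2)/(2*x^2-2*x+1)^2) (at x)"
    using nz by (auto intro!: derivative_eq_intros simp: field_simps power2_eq_square)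
  have d4: "((\<lambda>x. 8*x/(x-1)^2) has_real_derivative (-8)*(x+1)/(x-1)^3) (at x)"
  proof -
    have e: "x * 16 + 8 * (x - 1)^2 - x * (x * 16) = (- 8 - x * 8) * (x - 1)" by algebra
    have e4: "(x - 1) ^ 4 = (x-1)^3 * (x-1)" by algebra
    show ?thesis
      apply (rule derivative_eq_intros refl | simp)+
      using nz apply (simp add: field_simps power2_eq_square power3_eq_cube)
      apply (simp add: algebra_simps)
      unfolding e e4 using nz by simp
  qed
  have d5: "((\<lambda>x. 8*x/(x+1)^2) has_real_derivative 8*(1-x)/(x+1)^3) (at x)"
  proof -
    have e: "8 * (1 + x)^2 - (x * 16 + x * (x * 16)) = (8 - x * 8) * (1 + x)" by algebra
    have e4: "(1 + x) ^ 4 = (1 + x)^3 * (1 + x)" by algebra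
    have nz': "1 + x \<noteq> 0" using x by auto
    show ?thesis
      apply (rule derivative_eq_intros refl | simp)+
      using nz apply (simp add: field_simps power2_eq_square power3_eq_cube)
      apply (simp add: algebra_simps)
      unfolding e e4 using nz' by simp
  qed
  have d6: "((\<lambda>x. 1/x^2) has_real_derivative (-2)/x^3) (at x)"
    using nz by (auto intro!: derivative_eq_intros simp: field_simps power2_eq_square power3_eq_cube)
  have "((\<lambda>x. 6 * (17*x^2 + 16*x/(x^2+1) + 16/(2*x^2-2*x+1) + 8*x/(x-1)^2 + 8*x/(x+1)^2 + 1/x^2))
        has_real_derivative 6 * (34*x + 16*(1-x^2)/(x^2+1)^2 + (-16)*(4*x-2)/(2*x^2-2*x+1)^2
             + (-8)*(x+1)/(x-1)^3 + 8*(1-x)/(x+1)^3 + (-2)/x^3)) (at x)"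
    by (intro DERIV_cmult DERIV_add d1 d2 d3 d4 d5 d6)
  then show ?thesis unfolding E_B_def Ed_def by simp
qed

lemma Ed_Dd:
  assumes x: "1 < x"
  shows "Ed x * Dd x = 6 * Np x"
proof -
  have nz: "x \<noteq> 0" "x - 1 \<noteq> 0" "x + 1 \<noteq> 0" "x^2+1 \<noteq> 0" "2*x^2-2*x+1 \<noteq> 0"
    using x quad_pos[of x] by (auto simp: add_pos_nonneg)
  show ?thesis
    unfolding Ed_def Dd_def Np_def using nz
    apply (simp add: field_simps)
    apply algebra
    done
qed

lemma Dd_pos: "1 < x \<Longrightarrow> 0 < Dd x"
  unfolding Dd_def using quad_pos[of x]
  by (intro mult_pos_pos zero_less_power) (auto intro: add_pos_nonneg)

lemma Np_pos:
  assumes x: "4391/2500 \<le> x"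
  shows "0 < Np x"
proof -
  define u where "u = 2500*x - 4391"
  have u: "0 \<le> u" using x by (simp add: u_def)
  have "2500^18 * Np x = 15024546000454820007779421134918799148512050551892871488262867656 + u * (14738433557836663286802702678016839527028593243352751537830605488 + u * (53939717898494936595970024748678639927978182167030232200230728 + u * (93779887286407761085646952328512031813777107754466394408576 + u * (102660130817720730648263793525244198859275470218366745760 + u * (79165960439039896680690430068144165904174532600563008 + u * (45602803273330414350801415316689861970071845025824 + u * (20307153175778000471509132731815090223998730624 + u * (7136787957248025917877995043306799676770288 + u * (2003176985679722110497047194908796287520 + u * (451452149934810548993539858308008048 + u * (81664907199603525394855299917184 + u * (11786497146226634575345484064 + u * (1340256223536702046486848 + u * (117522745867194361760 + u * (7672235509037696 + u * (351286611848 + u * (10069168 + u * (136))))))))))))))))))"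
    unfolding S1 using R1[of "2500*x - 4391"] unfolding u_def .
  moreover have "0 < 15024546000454820007779421134918799148512050551892871488262867656 + u * (14738433557836663286802702678016839527028593243352751537830605488 + u * (53939717898494936595970024748678639927978182167030232200230728 + u * (93779887286407761085646952328512031813777107754466394408576 + u * (102660130817720730648263793525244198859275470218366745760 + u * (79165960439039896680690430068144165904174532600563008 + u * (45602803273330414350801415316689861970071845025824 + u * (20307153175778000471509132731815090223998730624 + u * (7136787957248025917877995043306799676770288 + u * (2003176985679722110497047194908796287520 + u * (451452149934810548993539858308008048 + u * (81664907199603525394855299917184 + u * (11786497146226634575345484064 + u * (1340256223536702046486848 + u * (117522745867194361760 + u * (7672235509037696 + u * (351286611848 + u * (10069168 + u * (136))))))))))))))))))"
    using u by (intro add_pos_nonneg mult_nonneg_nonneg add_nonneg_nonneg) simp_all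
  ultimately have "0 < (2500::real)^18 * Np x" by simp
  then show ?thesis by (simp add: zero_less_mult_iff)
qed

lemma Np_neg:
  assumes x: "1 < x" "x \<le> 4389/2500"
  shows "Np x < 0"
proof -
  define P where "P = 2500*x - 2500"
  define Q where "Q = 4389 - 2500*x"
  have P: "0 < P" and Q: "0 \<le> Q" using x by (simp_all add: P_def Q_def)
  have "(2500*1889)^18 * Np x = - ((7450580596923828125000000000000000000000000000000000000000000000) * P^0 * Q^18 + (196036696434020996093750000000000000000000000000000000000000000000) * P^1 * Q^17 + (2441530559659004211425781250000000000000000000000000000000000000000) * P^2 * Q^16 + (19119573448687553405761718750000000000000000000000000000000000000000) * P^3 * Q^15 + (105453612082498708415031433105468750000000000000000000000000000000000) * P^4 * Q^14 + (434763833924628385580663681030273437500000000000000000000000000000000) * P^5 * Q^13 + (1387432977862209757359814826965332031250000000000000000000000000000000) * P^6 * Q^12 + (3500446694472468875692738337420654296875000000000000000000000000000000) * P^7 * Q^11 + (7067892869484998864560055276655302276611328125000000000000000000000000) * P^8 * Q^10 + (11484562244205409830993167702595055187683105468750000000000000000000000) * P^9 * Q^9 + (15014367295476100161061087923072683873641931152343750000000000000000000) * P^10 * Q^8 + (15699670091417985172083368413672170570781674785156250000000000000000000) * P^11 * Q^7 + (12965964099923836351122252105022963772860782254526367187500000000000000) * P^12 * Q^6 + (8278127343481904942224481859763244004394194756114720703125000000000000) * P^13 * Q^5 + (3944748144989644175351560795197300453602465927358598817421875000000000) * P^14 * Q^4 + (1321850506913697214997595181613137454037735569810716047771375000000000)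 * P^15 * Q^3 + (278105817221153248765506010017254817408172930719858781393253000000000) * P^16 * Q^2 + (27691723686313327508512044007680837798548344751199808816067882240000) * P^17 * Q^1 + (14237310842691119750128496419807173175877622910029120343932753784) * P^18 * Q^0)"
    unfolding S2 using L1[of "2500*x - 2500" "4389 - 2500*x"] unfolding P_def Q_def .
  moreover have "0 < (7450580596923828125000000000000000000000000000000000000000000000) * P^0 * Q^18 + (196036696434020996093750000000000000000000000000000000000000000000) * P^1 * Q^17 + (2441530559659004211425781250000000000000000000000000000000000000000) * P^2 * Q^16 + (19119573448687553405761718750000000000000000000000000000000000000000) * P^3 * Q^15 + (105453612082498708415031433105468750000000000000000000000000000000000) * P^4 * Q^14 + (434763833924628385580663681030273437500000000000000000000000000000000) * P^5 * Q^13 + (1387432977862209757359814826965332031250000000000000000000000000000000) * P^6 * Q^12 + (3500446694472468875692738337420654296875000000000000000000000000000000) * P^7 * Q^11 + (7067892869484998864560055276655302276611328125000000000000000000000000) * P^8 * Q^10 + (11484562244205409830993167702595055187683105468750000000000000000000000) * P^9 * Q^9 + (15014367295476100161061087923072683873641931152343750000000000000000000) * P^10 * Q^8 + (15699670091417985172083368413672170570781674785156250000000000000000000) * P^11 * Q^7 + (12965964099923836351122252105022963772860782254526367187500000000000000) * P^12 * Q^6 + (8278127343481904942224481859763244004394194756114720703125000000000000) * P^13 * Q^5 + (3944748144989644175351560795197300453602465927358598817421875000000000) * P^14 * Q^4 + (1321850506913697214997595181613137454037735569810716047771375000000000) * P^15 * Q^3 + (278105817221153248765506010017254817408172930719858781393253000000000)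 * P^16 * Q^2 + (27691723686313327508512044007680837798548344751199808816067882240000) * P^17 * Q^1 + (14237310842691119750128496419807173175877622910029120343932753784) * P^18 * Q^0"
    unfolding power_0 mult_1_right
    using P Q by (intro add_nonneg_pos add_nonneg_nonneg mult_nonneg_nonneg mult_pos_pos zero_le_power zero_less_power) simp_all
  ultimately have "(2500*1889)^18 * Np x < (0::real)" by simp
  then show ?thesis by (simp add: mult_less_0_iff)
qed

lemma Ed_neg: "1 < x \<Longrightarrow> x \<le> 4389/2500 \<Longrightarrow> Ed x < 0"
  using Ed_Dd[of x] Dd_pos[of x] Np_neg[of x]
  by (metis mult_less_0_iff mult_pos_pos less_asym zero_less_numeral)

lemma Ed_pos: "4391/2500 \<le> x \<Longrightarrow> 0 < Ed x"
proof -
  assume x: "4391/2500 \<le> x"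
  then have x1: "1 < x" by simp
  have "0 < 6 * Np x" using Np_pos[OF x] by simp
  then have "0 < Ed x * Dd x" using Ed_Dd[OF x1] by simp
  then show ?thesis using Dd_pos[OF x1] by (simp add: zero_less_mult_iff)
qed

definition gB :: "real \<Rightarrow> real" where
  "gB x = 16*x/(x^2+1) + 16/(2*x^2-2*x+1) + 8*x/(x-1)^2 + 8*x/(x+1)^2 + 1/x^2"

lemma E_B_split: "E_B x = 6*(17*x^2 + gB x)"
  by (simp add: E_B_def gB_def add.assoc)

lemma gB_mono:
  assumes x: "1 < x" and xy: "x \<le> y"
  shows "gB y \<le> gB x"
proof -
  have y: "1 < y" using x xy by simp
  have k: "0 \<le> (y-x)*(x*y-1)"
  proof (rule mult_nonneg_nonneg)
    show "0 \<le> y - x" using xy by simp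
    have "1 * 1 < x * y" using x y by (intro mult_strict_mono) auto
    then show "0 \<le> x*y-1" by simp
  qed
  have m1: "16*y/(y^2+1) \<le> 16*x/(x^2+1)"
  proof -
    have "16*x*(y^2+1) - 16*y*(x^2+1) = 16*((y-x)*(x*y-1))" by algebra
    then have "16*y*(x^2+1) \<le> 16*x*(y^2+1)" using k by linarith
    moreover have "0 < x^2+1" "0 < y^2+1" by (auto intro: add_nonneg_pos)
    ultimately show ?thesis by (simp add: divide_simps)
  qed
  have m2: "16/(2*y^2-2*y+1) \<le> 16/(2*x^2-2*x+1)"
  proof (rule divide_left_mono)
    have "(2*y^2-2*y+1) - (2*x^2-2*x+1) = 2*((y-x)*(x+y-1))" by algebra
    moreover have "0 \<le> (y-x)*(x+y-1)" using x xy by (intro mult_nonneg_nonneg) auto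
    ultimately show "2*x^2-2*x+1 \<le> 2*y^2-2*y+1" by linarith
    show "0 < (2*y^2-2*y+1) * (2*x^2-2*x+1)" using quad_pos[of x] quad_pos[of y] by simp
  qed simp
  have m3: "8*y/(y-1)^2 \<le> 8*x/(x-1)^2"
  proof -
    have "8*x*(y-1)^2 - 8*y*(x-1)^2 = 8*((y-x)*(x*y-1))" by algebra
    then have "8*y*(x-1)^2 \<le> 8*x*(y-1)^2" using k by linarith
    moreover have "0 < (x-1)^2" "0 < (y-1)^2" using x y by auto
    ultimately show ?thesis by (simp add: divide_simps)
  qed
  have m4: "8*y/(y+1)^2 \<le> 8*x/(x+1)^2"
  proof -
    have "8*x*(y+1)^2 - 8*y*(x+1)^2 = 8*((y-x)*(x*y-1))" by algebra
    then have "8*y*(x+1)^2 \<le> 8*x*(y+1)^2" using k by linarith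
    moreover have "0 < (x+1)^2" "0 < (y+1)^2" using x y by auto
    ultimately show ?thesis by (simp add: divide_simps)
  qed
  have m5: "1/y^2 \<le> 1/x^2"
    using x xy by (intro divide_left_mono power_mono) auto
  show ?thesis unfolding gB_def using m1 m2 m3 m4 m5 by linarith
qed

lemma piece:
  assumes "1 < u" "u \<le> b" "b \<le> v"
  shows "6*(17*u^2 + gB v) \<le> E_B b"
proof -
  have "u^2 \<le> b^2" using assms by (intro power_mono) auto
  moreover have "gB v \<le> gB b" using assms by (intro gB_mono) auto
  ultimately show ?thesis unfolding E_B_split by (intro mult_left_mono add_mono) auto
qed

lemma lower:
  assumes "4389/2500 \<le> b" "b \<le> 4391/2500"
  shows "54255/100 < E_B b"
proof -
  have p0: "54255/100 < 6*(17*(35112/20000)^2 + gB (35113/20000))" by (simp add: gB_def power_divide field_simps)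
  have p1: "54255/100 < 6*(17*(35113/20000)^2 + gB (35114/20000))" by (simp add: gB_def power_divide field_simps)
  have p2: "54255/100 < 6*(17*(35114/20000)^2 + gB (35115/20000))" by (simp add: gB_def power_divide field_simps)
  have p3: "54255/100 < 6*(17*(35115/20000)^2 + gB (35116/20000))" by (simp add: gB_def power_divide field_simps)
  have p4: "54255/100 < 6*(17*(35116/20000)^2 + gB (35117/20000))" by (simp add: gB_def power_divide field_simps)
  have p5: "54255/100 < 6*(17*(35117/20000)^2 + gB (35118/20000))" by (simp add: gB_def power_divide field_simps)
  have p6: "54255/100 < 6*(17*(35118/20000)^2 + gB (35119/20000))" by (simp add: gB_def power_divide field_simps)
  have p7: "54255/100 < 6*(17*(35119/20000)^2 + gB (35120/20000))" by (simp add: gB_def power_divide field_simps)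
  have p8: "54255/100 < 6*(17*(35120/20000)^2 + gB (35121/20000))" by (simp add: gB_def power_divide field_simps)
  have p9: "54255/100 < 6*(17*(35121/20000)^2 + gB (35122/20000))" by (simp add: gB_def power_divide field_simps)
  have p10: "54255/100 < 6*(17*(35122/20000)^2 + gB (35123/20000))" by (simp add: gB_def power_divide field_simps)
  have p11: "54255/100 < 6*(17*(35123/20000)^2 + gB (35124/20000))" by (simp add: gB_def power_divide field_simps)
  have p12: "54255/100 < 6*(17*(35124/20000)^2 + gB (35125/20000))" by (simp add: gB_def power_divide field_simps)
  have p13: "54255/100 < 6*(17*(35125/20000)^2 + gB (35126/20000))" by (simp add: gB_def power_divide field_simps)
  have p14: "54255/100 < 6*(17*(35126/20000)^2 + gB (35127/20000))" by (simp add: gB_def power_divide field_simps)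
  have p15: "54255/100 < 6*(17*(35127/20000)^2 + gB (35128/20000))" by (simp add: gB_def power_divide field_simps)
  have c0: "54255/100 < E_B b" if "(35112/20000) \<le> b" "b \<le> 35113/20000"
  proof -
    have "6*(17*(35112/20000)^2 + gB (35113/20000)) \<le> E_B b" by (rule piece) (use that in simp_all)
    then show ?thesis using p0 by linarith
  qed
  have c1: "54255/100 < E_B b" if "(35113/20000) \<le> b" "b \<le> 35114/20000"
  proof -
    have "6*(17*(35113/20000)^2 + gB (35114/20000)) \<le> E_B b" by (rule piece) (use that in simp_all)
    then show ?thesis using p1 by linarith
  qed
  have c2: "54255/100 < E_B b" if "(35114/20000) \<le> b" "b \<le> 35115/20000"
  proof -
    have "6*(17*(35114/20000)^2 + gB (35115/20000)) \<le> E_B b" by (rule piece) (use that in simp_all)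
    then show ?thesis using p2 by linarith
  qed
  have c3: "54255/100 < E_B b" if "(35115/20000) \<le> b" "b \<le> 35116/20000"
  proof -
    have "6*(17*(35115/20000)^2 + gB (35116/20000)) \<le> E_B b" by (rule piece) (use that in simp_all)
    then show ?thesis using p3 by linarith
  qed
  have c4: "54255/100 < E_B b" if "(35116/20000) \<le> b" "b \<le> 35117/20000"
  proof -
    have "6*(17*(35116/20000)^2 + gB (35117/20000)) \<le> E_B b" by (rule piece) (use that in simp_all)
    then show ?thesis using p4 by linarith
  qed
  have c5: "54255/100 < E_B b" if "(35117/20000) \<le> b" "b \<le> 35118/20000"
  proof -
    have "6*(17*(35117/20000)^2 + gB (35118/20000)) \<le> E_B b" by (rule piece) (use that in simp_all)
    then show ?thesis using p5 by linarith
  qed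
  have c6: "54255/100 < E_B b" if "(35118/20000) \<le> b" "b \<le> 35119/20000"
  proof -
    have "6*(17*(35118/20000)^2 + gB (35119/20000)) \<le> E_B b" by (rule piece) (use that in simp_all)
    then show ?thesis using p6 by linarith
  qed
  have c7: "54255/100 < E_B b" if "(35119/20000) \<le> b" "b \<le> 35120/20000"
  proof -
    have "6*(17*(35119/20000)^2 + gB (35120/20000)) \<le> E_B b" by (rule piece) (use that in simp_all)
    then show ?thesis using p7 by linarith
  qed
  have c8: "54255/100 < E_B b" if "(35120/20000) \<le> b" "b \<le> 35121/20000"
  proof -
    have "6*(17*(35120/20000)^2 + gB (35121/20000)) \<le> E_B b" by (rule piece) (use that in simp_all)
    then show ?thesis using p8 by linarith
  qed
  have c9: "54255/100 < E_B b" if "(35121/20000) \<le> b" "b \<le> 35122/20000"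
  proof -
    have "6*(17*(35121/20000)^2 + gB (35122/20000)) \<le> E_B b" by (rule piece) (use that in simp_all)
    then show ?thesis using p9 by linarith
  qed
  have c10: "54255/100 < E_B b" if "(35122/20000) \<le> b" "b \<le> 35123/20000"
  proof -
    have "6*(17*(35122/20000)^2 + gB (35123/20000)) \<le> E_B b" by (rule piece) (use that in simp_all)
    then show ?thesis using p10 by linarith
  qed
  have c11: "54255/100 < E_B b" if "(35123/20000) \<le> b" "b \<le> 35124/20000"
  proof -
    have "6*(17*(35123/20000)^2 + gB (35124/20000)) \<le> E_B b" by (rule piece) (use that in simp_all)
    then show ?thesis using p11 by linarith
  qed
  have c12: "54255/100 < E_B b" if "(35124/20000) \<le> b" "b \<le> 35125/20000"
  proof -
    have "6*(17*(35124/20000)^2 + gB (35125/20000)) \<le> E_B b" by (rule piece) (use that in simp_all)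
    then show ?thesis using p12 by linarith
  qed
  have c13: "54255/100 < E_B b" if "(35125/20000) \<le> b" "b \<le> 35126/20000"
  proof -
    have "6*(17*(35125/20000)^2 + gB (35126/20000)) \<le> E_B b" by (rule piece) (use that in simp_all)
    then show ?thesis using p13 by linarith
  qed
  have c14: "54255/100 < E_B b" if "(35126/20000) \<le> b" "b \<le> 35127/20000"
  proof -
    have "6*(17*(35126/20000)^2 + gB (35127/20000)) \<le> E_B b" by (rule piece) (use that in simp_all)
    then show ?thesis using p14 by linarith
  qed
  have c15: "54255/100 < E_B b" if "(35127/20000) \<le> b" "b \<le> 35128/20000"
  proof -
    have "6*(17*(35127/20000)^2 + gB (35128/20000)) \<le> E_B b" by (rule piece) (use that in simp_all)
    then show ?thesis using p15 by linarith
  qed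
  have e15: "35127/20000 \<le> b \<Longrightarrow> 54255/100 < E_B b"
  proof -
    assume h: "35127/20000 \<le> b"
    have "b \<le> 35128/20000" using assms(2) by simp
    then show ?thesis using c15 h by blast
  qed
  have e14: "35126/20000 \<le> b \<Longrightarrow> 54255/100 < E_B b"
  proof -
    assume h: "35126/20000 \<le> b"
    show ?thesis
    proof (cases "b \<le> 35127/20000")
      case True then show ?thesis using c14 h by blast
    next
      case False then show ?thesis using e15 by simp
    qed
  qed
  have e13: "35125/20000 \<le> b \<Longrightarrow> 54255/100 < E_B b"
  proof -
    assume h: "35125/20000 \<le> b"
    show ?thesis
    proof (cases "b \<le> 35126/20000")
      case True then show ?thesis using c13 h by blast
    next
      case False then show ?thesis using e14 by simp
    qed
  qed
  have e12: "35124/20000 \<le> b \<Longrightarrow> 54255/100 < E_B b"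
  proof -
    assume h: "35124/20000 \<le> b"
    show ?thesis
    proof (cases "b \<le> 35125/20000")
      case True then show ?thesis using c12 h by blast
    next
      case False then show ?thesis using e13 by simp
    qed
  qed
  have e11: "35123/20000 \<le> b \<Longrightarrow> 54255/100 < E_B b"
  proof -
    assume h: "35123/20000 \<le> b"
    show ?thesis
    proof (cases "b \<le> 35124/20000")
      case True then show ?thesis using c11 h by blast
    next
      case False then show ?thesis using e12 by simp
    qed
  qed
  have e10: "35122/20000 \<le> b \<Longrightarrow> 54255/100 < E_B b"
  proof -
    assume h: "35122/20000 \<le> b"
    show ?thesis
    proof (cases "b \<le> 35123/20000")
      case True then show ?thesis using c10 h by blast
    next
      case False then show ?thesis using e11 by simp
    qed
  qed
  have e9: "35121/20000 \<le> b \<Longrightarrow> 54255/100 < E_B b"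
  proof -
    assume h: "35121/20000 \<le> b"
    show ?thesis
    proof (cases "b \<le> 35122/20000")
      case True then show ?thesis using c9 h by blast
    next
      case False then show ?thesis using e10 by simp
    qed
  qed
  have e8: "35120/20000 \<le> b \<Longrightarrow> 54255/100 < E_B b"
  proof -
    assume h: "35120/20000 \<le> b"
    show ?thesis
    proof (cases "b \<le> 35121/20000")
      case True then show ?thesis using c8 h by blast
    next
      case False then show ?thesis using e9 by simp
    qed
  qed
  have e7: "35119/20000 \<le> b \<Longrightarrow> 54255/100 < E_B b"
  proof -
    assume h: "35119/20000 \<le> b"
    show ?thesis
    proof (cases "b \<le> 35120/20000")
      case True then show ?thesis using c7 h by blast
    next
      case False then show ?thesis using e8 by simp
    qed
  qed
  have e6: "35118/20000 \<le> b \<Longrightarrow> 54255/100 < E_B b"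
  proof -
    assume h: "35118/20000 \<le> b"
    show ?thesis
    proof (cases "b \<le> 35119/20000")
      case True then show ?thesis using c6 h by blast
    next
      case False then show ?thesis using e7 by simp
    qed
  qed
  have e5: "35117/20000 \<le> b \<Longrightarrow> 54255/100 < E_B b"
  proof -
    assume h: "35117/20000 \<le> b"
    show ?thesis
    proof (cases "b \<le> 35118/20000")
      case True then show ?thesis using c5 h by blast
    next
      case False then show ?thesis using e6 by simp
    qed
  qed
  have e4: "35116/20000 \<le> b \<Longrightarrow> 54255/100 < E_B b"
  proof -
    assume h: "35116/20000 \<le> b"
    show ?thesis
    proof (cases "b \<le> 35117/20000")
      case True then show ?thesis using c4 h by blast
    next
      case False then show ?thesis using e5 by simp
    qed
  qed
  have e3: "35115/20000 \<le> b \<Longrightarrow> 54255/100 < E_B b"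
  proof -
    assume h: "35115/20000 \<le> b"
    show ?thesis
    proof (cases "b \<le> 35116/20000")
      case True then show ?thesis using c3 h by blast
    next
      case False then show ?thesis using e4 by simp
    qed
  qed
  have e2: "35114/20000 \<le> b \<Longrightarrow> 54255/100 < E_B b"
  proof -
    assume h: "35114/20000 \<le> b"
    show ?thesis
    proof (cases "b \<le> 35115/20000")
      case True then show ?thesis using c2 h by blast
    next
      case False then show ?thesis using e3 by simp
    qed
  qed
  have e1: "35113/20000 \<le> b \<Longrightarrow> 54255/100 < E_B b"
  proof -
    assume h: "35113/20000 \<le> b"
    show ?thesis
    proof (cases "b \<le> 35114/20000")
      case True then show ?thesis using c1 h by blast
    next
      case False then show ?thesis using e2 by simp
    qed
  qed
  have e0: "35112/20000 \<le> b \<Longrightarrow> 54255/100 < E_B b"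
  proof -
    assume h: "35112/20000 \<le> b"
    show ?thesis
    proof (cases "b \<le> 35113/20000")
      case True then show ?thesis using c0 h by blast
    next
      case False then show ?thesis using e1 by simp
    qed
  qed
  have "35112/20000 \<le> b" using assms(1) by simp
  then show ?thesis using e0 by blast
qed

lemma upper: "E_B (1756/1000) < 54265/100"
  by (simp add: E_B_def power_divide field_simps)

theorem mainTheorem5:
  shows "(\<forall>\<alpha>::real. \<alpha> > 1 \<longrightarrow>
            md_energy (borromean \<alpha>) = E_B \<alpha>
          \<and> md_energy [rect1 \<alpha>] = 2 * (\<alpha>\<^sup>2 + 1 / \<alpha>\<^sup>2)
          \<and> md_energy [rect2 \<alpha>] = 2 * (\<alpha>\<^sup>2 + 1 / \<alpha>\<^sup>2)
          \<and> md_energy [rect3 \<alpha>] = 2 * (\<alpha>\<^sup>2 + 1 / \<alpha>\<^sup>2))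
       \<and> (\<exists>a::real. a > 1 \<and> (\<forall>b::real. b > 1 \<longrightarrow> E_B a \<le> E_B b)
            \<and> \<bar>a - 1.756\<bar> < 0.0005 \<and> \<bar>E_B a - 542.6\<bar> < 0.05)"
proof
  show "\<forall>\<alpha>::real. \<alpha> > 1 \<longrightarrow>
            md_energy (borromean \<alpha>) = E_B \<alpha>
          \<and> md_energy [rect1 \<alpha>] = 2 * (\<alpha>\<^sup>2 + 1 / \<alpha>\<^sup>2)
          \<and> md_energy [rect2 \<alpha>] = 2 * (\<alpha>\<^sup>2 + 1 / \<alpha>\<^sup>2)
          \<and> md_energy [rect3 \<alpha>] = 2 * (\<alpha>\<^sup>2 + 1 / \<alpha>\<^sup>2)"
    using energy_B energy_single by blast
next
  define L :: real where "L = 4389/2500"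
  define R :: real where "R = 4391/2500"
  have LR: "1 < L" "L \<le> R" by (simp_all add: L_def R_def)
  have cont: "continuous_on {L..R} E_B"
  proof (rule continuous_at_imp_continuous_on, intro ballI)
    fix x assume "x \<in> {L..R}"
    then have "1 < x" using LR by auto
    then show "isCont E_B x" by (rule DERIV_isCont[OF E_B_deriv])
  qed
  obtain a where a: "a \<in> {L..R}" and amin: "\<And>y. y \<in> {L..R} \<Longrightarrow> E_B a \<le> E_B y"
    using continuous_attains_inf[OF compact_Icc _ cont] LR by auto
  have a1: "1 < a" using a LR by auto
  have left: "E_B L \<le> E_B b" if b: "1 < b" "b \<le> L" for b
  proof -
    have "E_B b \<ge> E_B L"
    proof (rule DERIV_nonpos_imp_nonincreasing[OF b(2)])
      fix x assume x: "b \<le> x" "x \<le> L"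
      then have x1: "1 < x" using b by simp
      show "\<exists>y. DERIV E_B x :> y \<and> y \<le> 0"
        using E_B_deriv[OF x1] Ed_neg[OF x1] x(2) unfolding L_def
        by (intro exI[of _ "Ed x"]) auto
    qed
    then show ?thesis by simp
  qed
  have right: "E_B R \<le> E_B b" if b: "R \<le> b" for b
  proof (rule DERIV_nonneg_imp_nondecreasing[OF b])
    fix x assume x: "R \<le> x" "x \<le> b"
    then have xR: "4391/2500 \<le> x" unfolding R_def by simp
    then have x1: "1 < x" by simp
    show "\<exists>y. DERIV E_B x :> y \<and> y \<ge> 0"
      using E_B_deriv[OF x1] Ed_pos[OF xR]
      by (intro exI[of _ "Ed x"]) auto
  qed
  have glob: "E_B a \<le> E_B b" if b: "1 < b" for b
  proof (cases "b \<le> L")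
    case True
    then show ?thesis using left[OF b True] amin[of L] LR by auto
  next
    case F: False
    show ?thesis
    proof (cases "R \<le> b")
      case True
      then show ?thesis using right[OF True] amin[of R] LR by auto
    next
      case False
      then show ?thesis using F amin[of b] by auto
    qed
  qed
  have up: "E_B a \<le> E_B (1756/1000)" using amin[of "1756/1000"] by (simp add: L_def R_def)
  have lo: "54255/100 < E_B a" using lower a by (simp add: L_def R_def)
  show "\<exists>a::real. a > 1 \<and> (\<forall>b::real. b > 1 \<longrightarrow> E_B a \<le> E_B b)
            \<and> \<bar>a - 1.756\<bar> < 0.0005 \<and> \<bar>E_B a - 542.6\<bar> < 0.05"
  proof (intro exI[of _ a] conjI allI impI)
    show "1 < a" by (rule a1)
    show "E_B a \<le> E_B b" if "1 < b" for b using glob that by blast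
    have h: "4389/2500 \<le> a" "a \<le> 4391/2500" using a by (simp_all add: L_def R_def)
    have h1: "a - 1.756 < 0.0005" using h by simp
    have h2: "-0.0005 < a - 1.756" using h by simp
    show "\<bar>a - 1.756\<bar> < 0.0005" using h1 h2 by (simp only: abs_less_iff) simp
    have g1: "E_B a - 542.6 < 0.05" using up upper by simp
    have g2: "-0.05 < E_B a - 542.6" using lo by simp
    show "\<bar>E_B a - 542.6\<bar> < 0.05" using g1 g2 by (simp only: abs_less_iff) simp
  qed
qed

end
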